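(* Let $P$ be an $n\times n$ sign pattern and $A\in\mathcal{Q}(P)$. If $A$ has the nSSP, then for every superpattern $P'$ of $P$ there exists $A'\in\mathcal{Q}(P')$ such that $A'$ is similar to $A$ and $A'$ has the nSSP.
   Context: A sign pattern is an array with entries in $\{+,-,0\}$; its qualitative class $\mathcal{Q}(P)$ is the set of real matrices of the same size whose entries have the signs prescribed by $P$. $P'$ is a superpattern of $P$ if $P'$ is obtained from $P$ by replacing some (possibly none) of its $0$ entries by $+$ or $-$. $\circ$ is the entrywise product. A real $n\times n$ matrix $A$ has the non-symmetric strong spectral property (nSSP) if $X=O$ is the only real $n\times n$ matrix with $A\circ X=O$ and $AX^\top-X^\top A=O$. *)

theory Defs
  imports "HOL-Analysis.Analysis"
begin

datatype sgn_entry = SPos | SNeg | SZero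

type_synonym 'n sign_pattern = "'n \<Rightarrow> 'n \<Rightarrow> sgn_entry"

definition has_sign :: "real \<Rightarrow> sgn_entry \<Rightarrow> bool" where
  "has_sign x s = (case s of SPos \<Rightarrow> x > 0 | SNeg \<Rightarrow> x < 0 | SZero \<Rightarrow> x = 0)"

definition qual_class :: "'n sign_pattern \<Rightarrow> (real^'n^'n) set" where
  "qual_class P = {A. \<forall>i j. has_sign (A $ i $ j) (P i j)}"

definition superpattern :: "'n sign_pattern \<Rightarrow> 'n sign_pattern \<Rightarrow> bool" where
  "superpattern P' P = (\<forall>i j. P i j \<noteq> SZero \<longrightarrow> P' i j = P i j)"

definition hadamard :: "real^'n^'m \<Rightarrow> real^'n^'m \<Rightarrow> real^'n^'m" where
  "hadamard A B = (\<chi> i j. A $ i $ j * B $ i $ j)"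

definition nSSP :: "real^'n^'n \<Rightarrow> bool" where
  "nSSP A = (\<forall>X::real^'n^'n. hadamard A X = 0 \<and> A ** transpose X - transpose X ** A = 0 \<longrightarrow> X = 0)"

definition similar_matrix :: "real^'n^'n \<Rightarrow> real^'n^'n \<Rightarrow> bool" where
  "similar_matrix A B = (\<exists>S::real^'n^'n. invertible S \<and> A = matrix_inv S ** B ** S)"

end

theory Submission
  imports Defs
begin

lemma minv: fixes S :: "real^'n^'n" assumes "invertible S"
  shows "matrix_inv S ** S = mat 1" "S ** matrix_inv S = mat 1"
proof -
  have "\<exists>A'. S ** A' = mat 1 \<and> A' ** S = mat 1" using assms invertible_def by blast
  from someI_ex[OF this] show "matrix_inv S ** S = mat 1" "S ** matrix_inv S = mat 1"
    unfolding matrix_inv_def by auto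
qed

lemma bb_mult: "bounded_bilinear (\<lambda>(X::real^'n^'m) (Y::real^'k^'n). X ** Y)"
  unfolding bilinear_conv_bounded_bilinear[symmetric] bilinear_def
  by (auto intro!: linearI simp: vec_eq_iff
      matrix_matrix_mult_def sum_distrib_left algebra_simps sum.distrib)

lemma swap3: "(\<Sum>i\<in>I. \<Sum>j\<in>J. \<Sum>k\<in>K. f i j k) = (\<Sum>k\<in>K. \<Sum>j\<in>J. \<Sum>i\<in>I. f i j k)"
proof -
  have "(\<Sum>i\<in>I. \<Sum>j\<in>J. \<Sum>k\<in>K. f i j k) = (\<Sum>i\<in>I. \<Sum>k\<in>K. \<Sum>j\<in>J. f i j k)"
    by (rule sum.cong, simp, rule sum.swap)
  also have "\<dots> = (\<Sum>k\<in>K. \<Sum>i\<in>I. \<Sum>j\<in>J. f i j k)" by (rule sum.swap)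
  also have "\<dots> = (\<Sum>k\<in>K. \<Sum>j\<in>J. \<Sum>i\<in>I. f i j k)"
    by (rule sum.cong, simp, rule sum.swap)
  finally show ?thesis .
qed

lemma inner_mult_left: fixes X A K :: "real^'n^'n"
  shows "X \<bullet> (A ** K) = (transpose A ** X) \<bullet> K"
  unfolding inner_vec_def matrix_matrix_mult_def transpose_def
  apply (simp add: sum_distrib_left sum_distrib_right)
  apply (subst swap3) by (simp add: algebra_simps)

lemma inner_mult_right: fixes X A K :: "real^'n^'n"
  shows "X \<bullet> (K ** A) = (X ** transpose A) \<bullet> K"
  unfolding inner_vec_def matrix_matrix_mult_def transpose_def
  apply (simp add: sum_distrib_left sum_distrib_right)
  apply (rule sum.cong, simp)
  apply (subst sum.swap) by (simp add: algebra_simps)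

lemma transpose_diff: "transpose ((X::real^'n^'n) - Y) = transpose X - transpose Y"
  by (simp add: transpose_def vec_eq_iff)

lemma continuous_on_det: fixes f :: "'a::topological_space \<Rightarrow> real^'n^'n"
  assumes "continuous_on S f" shows "continuous_on S (\<lambda>x. det (f x))"
  unfolding det_def by (intro continuous_intros assms)

definition projZ :: "real^'n^'n \<Rightarrow> real^'n^'n \<Rightarrow> real^'n^'n" where
  "projZ A Y = (\<chi> i j. if A$i$j = 0 then Y$i$j else 0)"
definition projN :: "real^'n^'n \<Rightarrow> real^'n^'n \<Rightarrow> real^'n^'n" where
  "projN A Y = (\<chi> i j. if A$i$j = 0 then 0 else Y$i$j)"

lemma linear_projZ: "linear (projZ A)"
  by (auto intro!: linearI simp: projZ_def vec_eq_iff)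
lemma linear_projN: "linear (projN A)"
  by (auto intro!: linearI simp: projN_def vec_eq_iff)
lemma projZN: "projZ A Y + projN A Y = Y"
  by (auto simp: projZ_def projN_def vec_eq_iff)
lemma projZ_A: "projZ A A = 0"
  by (auto simp: projZ_def vec_eq_iff)
lemma projZ_idem: "projZ A (projZ A Y) = projZ A Y"
  by (auto simp: projZ_def vec_eq_iff)
lemma projN_projZ: "projN A (projZ A Y) = 0"
  by (auto simp: projZ_def projN_def vec_eq_iff)
lemma projZ_inner: "projZ A X \<bullet> Y = X \<bullet> projZ A Y"
  by (auto simp: projZ_def inner_vec_def intro!: sum.cong)
lemma hadamard_projZ: "hadamard A (projZ A X) = 0"
  by (auto simp: projZ_def hadamard_def vec_eq_iff)

lemma surjD:
  fixes A :: "real^'n^'n"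
  assumes ns: "nSSP A"
  shows "\<exists>K. projZ A (A ** K - K ** A) = projZ A Y"
proof (rule ccontr)
  assume nex: "\<not> ?thesis"
  define D where "D K = projZ A (A ** K - K ** A)" for K
  have linD: "linear D" unfolding D_def
    by (auto intro!: linearI simp: projZ_def vec_eq_iff matrix_matrix_mult_def sum.distrib
        sum_distrib_left algebra_simps)
  have subS: "subspace (range D)" by (rule linear_subspace_image[OF linD]) simp
  have subT: "subspace (range (projZ A))" by (rule linear_subspace_image[OF linear_projZ]) simp
  have ST: "range D \<subseteq> range (projZ A)" unfolding D_def by auto
  have sub: "span (range D) \<subset> span (range (projZ A))"
  proof
    show "span (range D) \<subseteq> span (range (projZ A))" using ST by (rule span_mono)
    show "span (range D) \<noteq> span (range (projZ A))"
    proof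
      assume "span (range D) = span (range (projZ A))"
      hence "range D = range (projZ A)" using subS subT by (metis span_eq_iff)
      hence "projZ A Y \<in> range D" by auto
      thus False using nex unfolding D_def by auto
    qed
  qed
  then obtain X where X: "X \<noteq> 0" "X \<in> span (range (projZ A))"
    "\<And>y. y \<in> span (range D) \<Longrightarrow> orthogonal X y"
    using orthogonal_to_subspace_exists_gen[OF sub] by blast
  from X(2) subT obtain Z where XZ: "X = projZ A Z" by (metis span_eq_iff imageE)
  have had: "hadamard A X = 0" using XZ hadamard_projZ by simp
  have PX: "projZ A X = X" using XZ projZ_idem by simp
  have orth: "X \<bullet> (A ** K - K ** A) = 0" for K
  proof -
    have "X \<bullet> D K = 0" using X(3)[of "D K"] span_base[of "D K" "range D"]
      by (auto simp: orthogonal_def)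
    thus ?thesis unfolding D_def projZ_inner[symmetric] PX .
  qed
  define M where "M = transpose A ** X - X ** transpose A"
  have "X \<bullet> (A ** M - M ** A) = (transpose A ** X) \<bullet> M - (X ** transpose A) \<bullet> M"
    by (simp only: inner_diff_right inner_mult_left[of X A M] inner_mult_right[where X=X and A=A and K=M])
  also have "\<dots> = M \<bullet> M" by (simp add: M_def inner_diff_left)
  finally have "M \<bullet> M = 0" using orth[of M] by simp
  hence "M = 0" by simp
  hence "transpose M = 0" by (simp add: transpose_def vec_eq_iff)
  hence "A ** transpose X - transpose X ** A = 0"
    unfolding M_def transpose_diff matrix_transpose_mul by simp
  with had ns X(1) show False unfolding nSSP_def by blast
qed

lemma right_inv:
  fixes A :: "real^'n^'n"
  assumes ns: "nSSP A"
  obtains h where "linear h" "\<And>Y. projZ A (A ** h Y - h Y ** A) = projZ A Y"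
proof -
  define D where "D K = projZ A (A ** K - K ** A)" for K
  have linD: "linear D" unfolding D_def
    by (auto intro!: linearI simp: projZ_def vec_eq_iff matrix_matrix_mult_def sum.distrib
        sum_distrib_left algebra_simps)
  define k where "k b = (SOME K. D K = projZ A b)" for b
  have k: "D (k b) = projZ A b" for b unfolding k_def D_def using surjD[OF ns] by (rule someI_ex)
  define h where "h Y = (\<Sum>b\<in>Basis. (Y \<bullet> b) *\<^sub>R k b)" for Y
  have "linear h" unfolding h_def
    by (auto intro!: linearI simp: inner_add_left scaleR_add_left sum.distrib scaleR_sum_right)
  moreover have "D (h Y) = projZ A Y" for Y
  proof -
    have "D (h Y) = (\<Sum>b\<in>Basis. (Y \<bullet> b) *\<^sub>R D (k b))" unfolding h_def
      by (simp add: linear_sum[OF linD] linear_cmul[OF linD])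
    also have "\<dots> = projZ A (\<Sum>b\<in>Basis. (Y \<bullet> b) *\<^sub>R b)"
      by (simp add: k linear_sum[OF linear_projZ] linear_cmul[OF linear_projZ])
    finally show ?thesis by (simp add: euclidean_representation)
  qed
  ultimately show ?thesis using that unfolding D_def by blast
qed

lemma minv_formula:
  fixes M :: "real^'n^'n" assumes d: "det M \<noteq> 0"
  shows "matrix_inv M = (\<chi> i j. det (\<chi> a b. if b = i then (if a = j then 1 else 0) else M$a$b) / det M)"
proof -
  have inv: "invertible M" using d invertible_det_nz by blast
  have "matrix_inv M $ i $ j = det (\<chi> a b. if b = i then (if a = j then 1 else 0) else M$a$b) / det M" for i j
  proof -
    have "M *v (matrix_inv M *v axis j 1) = axis j 1"
      by (simp add: matrix_vector_mul_assoc minv[OF inv])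
    hence "matrix_inv M *v axis j 1 = (\<chi> k. det(\<chi> a b. if b=k then axis j 1 $a else M$a$b) / det M)"
      using cramer[OF d] by blast
    hence "(matrix_inv M *v axis j 1) $ i = det(\<chi> a b. if b=i then axis j 1 $a else M$a$b) / det M"
      by simp
    moreover have "(matrix_inv M *v axis j 1) $ i = matrix_inv M $ i $ j"
      by (simp add: matrix_vector_mult_basis column_def)
    moreover have "(\<chi> a b. if b=i then axis j 1 $a else M$a$b) = (\<chi> a b. if b = i then (if a = j then 1 else 0) else M$a$b)"
      by (simp add: axis_def vec_eq_iff)
    ultimately show ?thesis by simp
  qed
  thus ?thesis by (simp add: vec_eq_iff)
qed

lemma continuous_on_if_const: "continuous_on S f \<Longrightarrow> continuous_on S g \<Longrightarrow> continuous_on S (\<lambda>x. if P then f x else g x)"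
  by (cases P) auto

lemma continuous_on_minv:
  fixes f :: "'a::topological_space \<Rightarrow> real^'n^'n"
  assumes "continuous_on S f" "\<And>x. x \<in> S \<Longrightarrow> det (f x) \<noteq> 0"
  shows "continuous_on S (\<lambda>x. matrix_inv (f x))"
proof -
  have "continuous_on S (\<lambda>x. (\<chi> i j. det (\<chi> a b. if b = i then (if a = j then 1 else 0) else f x$a$b) / det (f x)))"
    by (intro continuous_intros continuous_on_if_const continuous_on_det assms) (use assms in auto)
  moreover have "\<And>x. x \<in> S \<Longrightarrow> matrix_inv (f x) = (\<chi> i j. det (\<chi> a b. if b = i then (if a = j then 1 else 0) else f x$a$b) / det (f x))"
    using minv_formula assms(2) by blast
  ultimately show ?thesis using continuous_on_cong by (metis (no_types, lifting))
qed

lemma continuous_on_mmult: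
  fixes f g :: "'a::topological_space \<Rightarrow> real^'n^'n"
  assumes "continuous_on S f" "continuous_on S g"
  shows "continuous_on S (\<lambda>x. f x ** g x)"
  unfolding matrix_matrix_mult_def by (intro continuous_intros assms)

lemma minv_1: "matrix_inv (mat 1 :: real^'n^'n) = mat 1"
  using minv(1)[of "mat 1 :: real^'n^'n"] by (simp add: invertible_def)

lemma mat_sub_rdistrib: "((X::real^'n^'n) - Y) ** Z = X ** Z - Y ** Z"
  by (simp add: vec_eq_iff matrix_matrix_mult_def sum_subtractf algebra_simps)

lemma mat_neg_left: "(- (X::real^'n^'n)) ** Z = - (X ** Z)"
  by (simp add: vec_eq_iff matrix_matrix_mult_def sum_negf)

lemma bb_sq: "\<exists>K>0. \<forall>(a::real^'n^'n) (b::real^'n^'n). norm (a ** b) \<le> norm a * norm b * K"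
  using bounded_bilinear.pos_bounded[OF bb_mult] by blast

lemma main_local:
  fixes A :: "real^'n^'n" and h :: "real^'n^'n \<Rightarrow> real^'n^'n"
  assumes lh: "linear h" and hD: "\<And>Y. projZ A (A ** h Y - h Y ** A) = projZ A Y"
  defines "U \<equiv> {Y. det (mat 1 + h Y) \<noteq> 0}"
  defines "\<Phi> \<equiv> \<lambda>Y. matrix_inv (mat 1 + h Y) ** A ** (mat 1 + h Y)"
  shows "open U" "0 \<in> U" "continuous_on U \<Phi>" "\<Phi> 0 = A"
   "\<And>T. T \<subseteq> U \<Longrightarrow> 0 \<in> interior T \<Longrightarrow> 0 \<in> interior ((\<lambda>Y. projZ A (\<Phi> Y) + projN A Y) ` T)"
proof -
  have blh: "bounded_linear h" using lh linear_conv_bounded_linear by blast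
  have h0: "h 0 = 0" using lh linear_0 by blast
  have contS: "continuous_on UNIV (\<lambda>Y. mat 1 + h Y)"
    by (intro continuous_intros linear_continuous_on blh)
  show oU: "open U" unfolding U_def
    by (rule open_Collect_neq) (intro continuous_on_det contS, simp)
  show U0: "0 \<in> U" unfolding U_def by (simp add: h0)
  define G where "G Y = matrix_inv (mat 1 + h Y)" for Y
  have contG: "continuous_on U G" unfolding G_def
    by (rule continuous_on_minv) (use contS continuous_on_subset in blast, simp add: U_def)
  have contP: "continuous_on U \<Phi>" unfolding \<Phi>_def G_def[symmetric]
    by (intro continuous_on_mmult contG continuous_on_const continuous_on_subset[OF contS]) simp
  thus "continuous_on U \<Phi>" .
  have G0: "G 0 = mat 1" by (simp add: G_def h0 minv_1)
  show P0: "\<Phi> 0 = A" by (simp add: \<Phi>_def h0 minv_1)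
  have GS: "G Y ** (mat 1 + h Y) = mat 1" if "Y \<in> U" for Y
    unfolding G_def using that by (simp add: U_def minv invertible_det_nz)
  obtain Kb where Kb: "Kb > 0" "\<And>(a::real^'n^'n) (b::real^'n^'n). norm (a ** b) \<le> norm a * norm b * Kb"
    using bb_sq by blast
  obtain Kh where Kh: "Kh > 0" "\<And>x. norm (h x) \<le> norm x * Kh"
    using bounded_linear.pos_bounded[OF blh] by blast
  have dG: "(G has_derivative (\<lambda>Y. - h Y)) (at 0)"
    unfolding has_derivative_at_within
  proof
    show "bounded_linear (\<lambda>Y. - h Y)" using blh by (rule bounded_linear_minus)
    have isG: "isCont G 0" using contG oU U0 continuous_on_eq_continuous_at by blast
    have "((\<lambda>y. Kb * Kh * norm (mat 1 - G y)) \<longlongrightarrow> Kb * Kh * norm (mat 1 - G 0)) (at 0)"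
      using isG unfolding isCont_def by (intro tendsto_intros)
    hence lim: "((\<lambda>y. Kb * Kh * norm (mat 1 - G y)) \<longlongrightarrow> 0) (at 0)" by (simp add: G0)
    have ev: "eventually (\<lambda>y. y \<in> U) (at (0::real^'n^'n))"
      using oU U0 eventually_at_topological by blast
    show "((\<lambda>y. (G y - G 0 - - h (y - 0)) /\<^sub>R norm (y - 0)) \<longlongrightarrow> 0) (at 0)"
    proof (rule Lim_null_comparison[OF _ lim])
      show "eventually (\<lambda>y. norm ((G y - G 0 - - h (y - 0)) /\<^sub>R norm (y - 0)) \<le> Kb * Kh * norm (mat 1 - G y)) (at 0)"
        using ev
      proof eventually_elim
        case (elim y)
        have eq: "G y - G 0 - - h (y - 0) = (mat 1 - G y) ** h y"
        proof -
          have "G y - mat 1 + h y = G y - G y ** (mat 1 + h y) + h y" using GS[OF elim] by simp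
          also have "\<dots> = (mat 1 - G y) ** h y"
            by (simp add: matrix_add_ldistrib mat_sub_rdistrib algebra_simps)
          finally show ?thesis by (simp add: G0)
        qed
        have "norm ((mat 1 - G y) ** h y) \<le> norm (mat 1 - G y) * (norm y * Kh) * Kb"
          using Kb(2)[of "mat 1 - G y" "h y"] Kh(2)[of y] Kb(1)
          by (meson mult_left_mono mult_right_mono norm_ge_zero order_trans less_imp_le)
        hence "norm ((mat 1 - G y) ** h y) \<le> norm y * (Kb * Kh * norm (mat 1 - G y))"
          by (simp add: algebra_simps)
        thus ?case unfolding eq using Kb Kh
          by (cases "y = 0") (auto simp: divide_simps mult.commute)
      qed
    qed
  qed
  have dS: "((\<lambda>Y. mat 1 + h Y) has_derivative h) (at 0)"
    using has_derivative_add[OF has_derivative_const bounded_linear_imp_has_derivative[OF blh]] by simp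
  define F where "F Y = projZ A (\<Phi> Y) + projN A Y" for Y
  have dP: "(\<Phi> has_derivative (\<lambda>k. (G 0 ** A) ** h k + ((G 0 ** 0) + (- h k) ** A) ** (mat 1 + h 0))) (at 0)"
    unfolding \<Phi>_def G_def[symmetric]
    by (intro bounded_bilinear.FDERIV[OF bb_mult] dG has_derivative_const dS)
  have blZ: "bounded_linear (projZ A)" using linear_projZ linear_conv_bounded_linear by blast
  have blN: "bounded_linear (projN A)" using linear_projN linear_conv_bounded_linear by blast
  have dF: "(F has_derivative id) (at 0)"
  proof -
    have "(F has_derivative (\<lambda>k. projZ A ((G 0 ** A) ** h k + ((G 0 ** 0) + (- h k) ** A) ** (mat 1 + h 0)) + projN A k)) (at 0)"
      unfolding F_def
      by (intro has_derivative_add bounded_linear.has_derivative[OF blZ dP]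
          bounded_linear_imp_has_derivative blN)
    moreover have "(\<lambda>k. projZ A ((G 0 ** A) ** h k + ((G 0 ** 0) + (- h k) ** A) ** (mat 1 + h 0)) + projN A k) = id"
    proof
      fix k
      have "(G 0 ** A) ** h k + ((G 0 ** 0) + (- h k) ** A) ** (mat 1 + h 0) = A ** h k - h k ** A"
        by (simp add: G0 h0 mat_neg_left)
      thus "projZ A ((G 0 ** A) ** h k + ((G 0 ** 0) + (- h k) ** A) ** (mat 1 + h 0)) + projN A k = id k"
        by (simp add: hD projZN)
    qed
    ultimately show ?thesis by simp
  qed
  have contF: "continuous_on U F" unfolding F_def
    by (intro continuous_intros linear_continuous_on blZ blN continuous_on_compose2[OF _ contP] ) auto
  show "0 \<in> interior ((\<lambda>Y. projZ A (\<Phi> Y) + projN A Y) ` T)" if "T \<subseteq> U" "0 \<in> interior T" for T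
  proof -
    have "F 0 \<in> interior (F ` T)"
      by (rule sussmann_open_mapping[OF oU contF U0 dF bounded_linear_ident _ that]) (simp add: comp_def id_def)
    moreover have "F 0 = 0" by (simp add: F_def P0 projZ_A h0 linear_0[OF linear_projN])
    ultimately show ?thesis unfolding F_def by simp
  qed
qed

lemma norm_transpose: "norm (transpose (X::real^'n^'n)) = norm X"
proof -
  have "transpose X \<bullet> transpose X = X \<bullet> X"
    unfolding inner_vec_def transpose_def by (simp, rule sum.swap)
  thus ?thesis by (simp add: norm_eq_sqrt_inner)
qed

lemma mat_add_rdistrib: "((X::real^'n^'n) + Y) ** Z = X ** Z + Y ** Z"
  by (simp add: vec_eq_iff matrix_matrix_mult_def sum.distrib algebra_simps)

lemma nSSP_open:
  fixes A :: "real^'n^'n" assumes ns: "nSSP A"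
  shows "\<exists>\<delta>>0. \<forall>B. norm (B - A) < \<delta> \<longrightarrow> (\<forall>i j. A$i$j \<noteq> 0 \<longrightarrow> B$i$j \<noteq> 0) \<longrightarrow> nSSP B"
proof -
  define T where "T X = (A ** transpose X - transpose X ** A, hadamard A X)" for X :: "real^'n^'n"
  have linT: "linear T" unfolding T_def
    by (auto intro!: linearI simp: vec_eq_iff transpose_def matrix_matrix_mult_def hadamard_def
        sum.distrib sum_distrib_left algebra_simps)
  have injT: "inj T"
  proof (rule injI)
    fix x y assume "T x = T y"
    hence "T (x - y) = 0" using linear_diff[OF linT] by simp
    hence "hadamard A (x - y) = 0 \<and> A ** transpose (x - y) - transpose (x - y) ** A = 0"
      by (simp add: T_def zero_prod_def)
    thus "x = y" using ns unfolding nSSP_def by auto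
  qed
  obtain g where "linear g" "g \<circ> T = id" using linear_injective_left_inverse[OF linT injT] by blast
  then obtain c where c: "c > 0" "\<And>x. c * norm x \<le> norm (T x)"
    using linear_invertible_bounded_below_pos[OF linT] by metis
  obtain Kb where Kb: "Kb > 0" "\<And>(a::real^'n^'n) (b::real^'n^'n). norm (a ** b) \<le> norm a * norm b * Kb"
    using bb_sq by blast
  define \<delta> where "\<delta> = c / (2 * Kb)"
  have "\<delta> > 0" using c Kb by (simp add: \<delta>_def)
  moreover have "nSSP B" if nB: "norm (B - A) < \<delta>" and nz: "\<forall>i j. A$i$j \<noteq> 0 \<longrightarrow> B$i$j \<noteq> 0" for B
    unfolding nSSP_def
  proof (intro allI impI)
    fix X :: "real^'n^'n"
    assume H: "hadamard B X = 0 \<and> B ** transpose X - transpose X ** B = 0"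
    have hA: "hadamard A X = 0"
    proof -
      have "B$i$j * X$i$j = 0" for i j using H by (simp add: hadamard_def vec_eq_iff)
      hence "A$i$j * X$i$j = 0" for i j using nz by (metis mult_eq_0_iff)
      thus ?thesis by (simp add: hadamard_def vec_eq_iff)
    qed
    define E where "E = B - A"
    have BAE: "B = A + E" by (simp add: E_def)
    have eq: "A ** transpose X - transpose X ** A = - (E ** transpose X - transpose X ** E)"
      using H unfolding BAE by (simp add: matrix_add_ldistrib mat_add_rdistrib algebra_simps)
    have "c * norm X \<le> norm (T X)" by (rule c(2))
    also have "\<dots> = norm (A ** transpose X - transpose X ** A)" by (simp add: T_def hA norm_Pair)
    also have "\<dots> \<le> norm (E ** transpose X) + norm (transpose X ** E)"
      unfolding eq norm_minus_cancel by (rule norm_triangle_ineq4)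
    also have "\<dots> \<le> norm E * norm X * Kb + norm X * norm E * Kb"
      using Kb(2)[of E "transpose X"] Kb(2)[of "transpose X" E] unfolding norm_transpose by linarith
    also have "\<dots> = (2 * Kb * norm E) * norm X" by (simp add: algebra_simps)
    finally have le: "c * norm X \<le> (2 * Kb * norm E) * norm X" .
    show "X = 0"
    proof (rule ccontr)
      assume "X \<noteq> 0"
      hence "norm X > 0" by simp
      with le have "c \<le> 2 * Kb * norm E" by simp
      moreover have "2 * Kb * norm E < c" using nB Kb(1) unfolding E_def \<delta>_def
        by (simp add: field_simps)
      ultimately show False by simp
    qed
  qed
  ultimately show ?thesis by blast
qed

fun sg :: "sgn_entry \<Rightarrow> real" where
  "sg SPos = 1" | "sg SNeg = -1" | "sg SZero = 0"

lemma has_sign_sg: "e > 0 \<Longrightarrow> has_sign (e * sg s) s"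
  by (cases s) (auto simp: has_sign_def)

lemma has_sign_zero_iff: "has_sign x s \<Longrightarrow> (x = 0 \<longleftrightarrow> s = SZero)"
  by (cases s) (auto simp: has_sign_def)

lemma has_sign_close: "has_sign x s \<Longrightarrow> \<bar>y - x\<bar> < \<bar>x\<bar> \<Longrightarrow> has_sign y s"
  by (cases s) (auto simp: has_sign_def)

lemma entry_le_norm: "\<bar>(X::real^'n^'n) $ i $ j\<bar> \<le> norm X"
  using component_le_norm_cart[where x="X $ i" and i=j] Finite_Cartesian_Product.norm_nth_le[where x=X and i=i] by linarith

theorem theorem5p3:
  fixes P :: "('n::finite) sign_pattern" and A :: "real^'n^'n"
  assumes "A \<in> qual_class P" and "nSSP A"
  shows "\<forall>P'. superpattern P' P \<longrightarrow>
           (\<exists>A'. A' \<in> qual_class P' \<and> similar_matrix A' A \<and> nSSP A')"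
proof (intro allI impI)
  fix P' assume sp: "superpattern P' P"
  have hsA: "has_sign (A$i$j) (P i j)" for i j using assms(1) by (simp add: qual_class_def)
  obtain h where lh: "linear h" and hD: "\<And>Y. projZ A (A ** h Y - h Y ** A) = projZ A Y"
    using right_inv[OF assms(2)] by blast
  define U where "U \<equiv> {Y. det (mat 1 + h Y) \<noteq> 0}"
  define \<Phi> where "\<Phi> \<equiv> \<lambda>Y. matrix_inv (mat 1 + h Y) ** A ** (mat 1 + h Y)"
  note LM = main_local[OF lh hD, folded U_def \<Phi>_def]
  obtain \<delta>0 where d0: "\<delta>0 > 0" "\<And>B. norm (B - A) < \<delta>0 \<Longrightarrow> (\<forall>i j. A$i$j \<noteq> 0 \<longrightarrow> B$i$j \<noteq> 0) \<Longrightarrow> nSSP B"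
    using nSSP_open[OF assms(2)] by blast
  define S1 where "S1 = (\<lambda>(i,j). \<bar>A$i$j\<bar>) ` {(i,j). A$i$j \<noteq> 0}"
  define \<delta>1 where "\<delta>1 = Min (insert 1 S1)"
  have finS1: "finite S1" unfolding S1_def by simp
  have d1: "\<delta>1 > 0" unfolding \<delta>1_def using finS1 by (auto simp: S1_def)
  have d1le: "\<delta>1 \<le> \<bar>A$i$j\<bar>" if "A$i$j \<noteq> 0" for i j
    unfolding \<delta>1_def using finS1 that by (intro Min_le) (auto simp: S1_def)
  define \<delta>2 where "\<delta>2 = min \<delta>0 \<delta>1"
  have d2: "\<delta>2 > 0" using d0 d1 by (simp add: \<delta>2_def)
  obtain d where d: "d > 0" "\<And>Y. Y \<in> U \<Longrightarrow> dist Y 0 < d \<Longrightarrow> dist (\<Phi> Y) (\<Phi> 0) < \<delta>2"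
    using LM(3) LM(2) d2 unfolding continuous_on_iff by metis
  define T where "T = U \<inter> ball 0 d"
  have "0 \<in> interior T" unfolding T_def using LM(1) LM(2) d(1)
    by (simp add: interior_open open_Int)
  hence "0 \<in> interior ((\<lambda>Y. projZ A (\<Phi> Y) + projN A Y) ` T)"
    using LM(5)[of T] by (simp add: T_def \<Phi>_def)
  then obtain e where e: "e > 0" "ball 0 e \<subseteq> (\<lambda>Y. projZ A (\<Phi> Y) + projN A Y) ` T"
    using mem_interior by blast
  define Y0 where "Y0 = (\<chi> i j. if A$i$j = 0 then sg (P' i j) else 0)"
  define \<epsilon> where "\<epsilon> = e / (2 * (norm Y0 + 1))"
  have eps: "\<epsilon> > 0" using e(1) unfolding \<epsilon>_def by (intro divide_pos_pos) (auto intro: add_nonneg_pos)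
  define Z where "Z = \<epsilon> *\<^sub>R Y0"
  have "norm Z = e * (norm Y0 / (2 * (norm Y0 + 1)))" using e(1) by (simp add: Z_def \<epsilon>_def)
  also have "\<dots> < e * 1"
  proof (intro mult_strict_left_mono e(1))
    have n0: "0 \<le> norm Y0" by simp
    have pos: "0 < 2*(norm Y0 + 1)" using n0 by (smt (verit))
    have "norm Y0 < 1 * (2 * (norm Y0 + 1))" using n0 by (smt (verit))
    thus "norm Y0 / (2 * (norm Y0 + 1)) < 1"
      using pos by (simp only: divide_less_eq) simp
  qed
  finally have "Z \<in> ball 0 e" by simp
  then obtain Y where Y: "Y \<in> T" "projZ A (\<Phi> Y) + projN A Y = Z" using e(2) by blast
  define A' where "A' = \<Phi> Y"
  have YU: "Y \<in> U" and Yd: "dist Y 0 < d" using Y(1) by (auto simp: T_def dist_commute)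
  have close: "norm (A' - A) < \<delta>2" using d(2)[OF YU Yd] LM(4) by (simp add: A'_def \<Phi>_def dist_norm)
  have zent: "A'$i$j = \<epsilon> * sg (P' i j)" if "A$i$j = 0" for i j
  proof -
    have "(projZ A (\<Phi> Y) + projN A Y) $ i $ j = Z $ i $ j" using Y(2) by simp
    thus ?thesis using that by (simp add: projZ_def projN_def Z_def Y0_def A'_def)
  qed
  have nzent: "has_sign (A'$i$j) (P i j) \<and> A'$i$j \<noteq> 0" if "A$i$j \<noteq> 0" for i j
  proof -
    have "\<bar>A'$i$j - A$i$j\<bar> \<le> norm (A' - A)" using entry_le_norm[of "A' - A" i j] by simp
    also have "\<dots> < \<bar>A$i$j\<bar>" using close d1le[OF that] by (simp add: \<delta>2_def)
    finally have cl: "\<bar>A'$i$j - A$i$j\<bar> < \<bar>A$i$j\<bar>" .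
    have "has_sign (A'$i$j) (P i j)" by (rule has_sign_close[OF hsA cl])
    moreover have "P i j \<noteq> SZero" using has_sign_zero_iff[OF hsA[of i j]] that by simp
    ultimately show ?thesis using has_sign_zero_iff by blast
  qed
  have "A' \<in> qual_class P'"
    unfolding qual_class_def
  proof (intro CollectI allI)
    fix i j
    show "has_sign (A'$i$j) (P' i j)"
    proof (cases "A$i$j = 0")
      case True thus ?thesis using zent has_sign_sg eps by simp
    next
      case False
      hence "P i j \<noteq> SZero" using has_sign_zero_iff[OF hsA[of i j]] by simp
      hence "P' i j = P i j" using sp by (simp add: superpattern_def)
      thus ?thesis using nzent[OF False] by simp
    qed
  qed
  moreover have "similar_matrix A' A"
    unfolding similar_matrix_def
  proof (intro exI conjI)
    show "invertible (mat 1 + h Y)" using YU by (simp add: U_def invertible_det_nz)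
    show "A' = matrix_inv (mat 1 + h Y) ** A ** (mat 1 + h Y)" by (simp add: A'_def \<Phi>_def)
  qed
  moreover have "nSSP A'"
    by (rule d0(2)) (use close nzent in \<open>auto simp: \<delta>2_def\<close>)
  ultimately show "\<exists>A'. A' \<in> qual_class P' \<and> similar_matrix A' A \<and> nSSP A'" by blast
qed

end
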